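(* Let $n,r\ge1$, $A_{-1}\in\mathbb{R}^{n\times n}$, $B\in\mathbb{R}^{n\times r}$, and let $A_2,A_3$ be $n\times n$ matrix functions on $[-1,0]$ with entries in $L_2([-1,0],\mathbb{C})$. Consider the neutral type system $$\dot z(t)=A_{-1}\dot z(t-1)+\int_{-1}^0A_2(\theta)\dot z(t+\theta)\,d\theta+\int_{-1}^0A_3(\theta)z(t+\theta)\,d\theta+Bu(t)$$ and its operator model $\dot x=\mathcal A x+\mathcal B u$ on $M_2$ described in the context. If the pair $(A_{-1},B)$ is not controllable, i.e. $\operatorname{rank}(B\ \ A_{-1}B\ \cdots\ A_{-1}^{n-1}B)<n$ (equivalently, there exist $\mu\in\sigma(A_{-1})$ and $y\in\mathbb{C}^n\setminus\{0\}$ with $A_{-1}^*y=\bar\mu y$ and $B^*y=0$), then the system is not exactly controllable at any time, i.e. $\mathcal R_T\neq\mathcal D(\mathcal A)$ for every $T>0$. (No assumption on invertibility of $A_{-1}$ is made.)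
   Context: The state space is $M_2=\mathbb{C}^n\times L_2(-1,0;\mathbb{C}^n)$. The operator $\mathcal A$ is defined by $\mathcal A(y,z(\cdot))=\big(Lz,\ \tfrac{d}{d\theta}z\big)$, where $Lz=\int_{-1}^0A_2(\theta)z'(\theta)\,d\theta+\int_{-1}^0A_3(\theta)z(\theta)\,d\theta$, on the domain $\mathcal D(\mathcal A)=\{(y,z(\cdot))\in M_2: z\in H^1(-1,0;\mathbb{C}^n),\ y=z(0)-A_{-1}z(-1)\}$; $\mathcal A$ generates a $C_0$-semigroup $e^{\mathcal At}$ on $M_2$. The control operator is $\mathcal Bu=(Bu,0)$ for $u\in\mathbb{C}^r$. The reachability set from $0$ at time $T$ is $\mathcal R_T=\{\int_0^Te^{\mathcal At}\mathcal Bu(t)\,dt: u\in L_2(0,T;\mathbb{C}^r)\}$. The system is exactly controllable at time $T$ if $\mathcal R_T=\mathcal D(\mathcal A)$ (equivalently, the set of restrictions to $[T-1,T]$ of solutions with zero initial data on $[-1,0]$, over all controls $u\in L_2(0,T;\mathbb{C}^r)$, equals $H^1(T-1,T;\mathbb{C}^n)$). *)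

theory Defs
  imports "HOL-Analysis.Analysis"
begin

definition L2_on :: "real \<Rightarrow> real \<Rightarrow> (real \<Rightarrow> 'a::{banach,second_countable_topology}) \<Rightarrow> bool" where
  "L2_on a b g \<longleftrightarrow>
     (\<lambda>t. indicator {a..b} t *\<^sub>R g t) \<in> borel_measurable lborel \<and>
     set_integrable lborel {a..b} (\<lambda>t. (norm (g t))\<^sup>2)"

definition H1_on :: "real \<Rightarrow> real \<Rightarrow> (real \<Rightarrow> 'a::{banach,second_countable_topology}) \<Rightarrow> bool" where
  "H1_on a b f \<longleftrightarrow>
     (\<exists>g. L2_on a b g \<and> (\<forall>t\<in>{a..b}. f t = f a + (LINT s:{a..t}|lborel. g s)))"

definition cmat :: "real^'m^'n \<Rightarrow> complex^'m^'n" where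
  "cmat M = (\<chi> i j. complex_of_real (M $ i $ j))"

primrec mpow :: "'a::semiring_1^'n^'n \<Rightarrow> nat \<Rightarrow> 'a^'n^'n" where
  "mpow A 0 = mat 1"
| "mpow A (Suc k) = A ** mpow A k"

text \<open>Rank of the Kalman matrix (B  A B  ...  A^(n-1) B): dimension of its column space.\<close>
definition kalman_rank :: "real^'n^'n \<Rightarrow> real^'r^'n \<Rightarrow> nat" where
  "kalman_rank A B = dim (span (\<Union>k<CARD('n). columns (mpow A k ** B)))"

definition neutral_solution ::
  "real^'n^'n \<Rightarrow> (real \<Rightarrow> complex^'n^'n) \<Rightarrow> (real \<Rightarrow> complex^'n^'n) \<Rightarrow> real^'r^'n
   \<Rightarrow> real \<Rightarrow> (real \<Rightarrow> complex^'r) \<Rightarrow> (real \<Rightarrow> complex^'n) \<Rightarrow> bool" where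
  "neutral_solution Am1 A2 A3 B T u z \<longleftrightarrow>
     (\<forall>t\<in>{-1..0}. z t = 0) \<and>
     (\<exists>w. L2_on (-1) T w \<and>
          (\<forall>t\<in>{-1..T}. z t = z (-1) + (LINT s:{-1..t}|lborel. w s)) \<and>
          (AE t in lborel. t \<in> {0..T} \<longrightarrow>
             w t = cmat Am1 *v w (t - 1)
                   + (LINT \<theta>:{-1..0}|lborel. A2 \<theta> *v w (t + \<theta>))
                   + (LINT \<theta>:{-1..0}|lborel. A3 \<theta> *v z (t + \<theta>))
                   + cmat B *v u t))"

text \<open>Restrictions to [T-1,T] (extended by 0 outside) of solutions with zero initial data,
  over all controls u in L2(0,T;C^r).\<close>
definition reach_restr ::
  "real^'n^'n \<Rightarrow> (real \<Rightarrow> complex^'n^'n) \<Rightarrow> (real \<Rightarrow> complex^'n^'n) \<Rightarrow> real^'r^'n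
   \<Rightarrow> real \<Rightarrow> (real \<Rightarrow> complex^'n) set" where
  "reach_restr Am1 A2 A3 B T =
     {(\<lambda>t. if t \<in> {T-1..T} then z t else 0) | u z.
        L2_on 0 T u \<and> neutral_solution Am1 A2 A3 B T u z}"

definition H1_restr :: "real \<Rightarrow> (real \<Rightarrow> complex^'n) set" where
  "H1_restr T = {f. H1_on (T-1) T f \<and> (\<forall>t. t \<notin> {T-1..T} \<longrightarrow> f t = 0)}"

definition exactly_controllable ::
  "real^'n^'n \<Rightarrow> (real \<Rightarrow> complex^'n^'n) \<Rightarrow> (real \<Rightarrow> complex^'n^'n) \<Rightarrow> real^'r^'n \<Rightarrow> real \<Rightarrow> bool" where
  "exactly_controllable Am1 A2 A3 B T \<longleftrightarrow> reach_restr Am1 A2 A3 B T = H1_restr T"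

end

theory Submission
  imports Defs
begin


lemma mpow_comm: "mpow A k ** A = A ** mpow A k"
  by (induction k) (simp_all add: matrix_mul_assoc[symmetric])

lemma column_mult: "A *v column i M = column i (A ** M)"
  by (simp add: column_def matrix_matrix_mult_def matrix_vector_mult_def vec_eq_iff)

lemma columns_Suc: "columns (mpow A (Suc k) ** B) = (\<lambda>x. A *v x) ` columns (mpow A k ** B)"
proof -
  have "columns (mpow A (Suc k) ** B) = {column i (A ** (mpow A k ** B)) |i. True}"
    by (simp add: columns_def matrix_mul_assoc)
  also have "\<dots> = (\<lambda>x. A *v x) ` columns (mpow A k ** B)"
    by (auto simp: columns_def column_mult image_iff) (metis column_mult)
  finally show ?thesis .
qed

lemma krylov_all:
  fixes A :: "real^'n^'n" and B :: "real^'r^'n"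
  shows "columns (mpow A k ** B) \<subseteq> span (\<Union>j<CARD('n). columns (mpow A j ** B))"
proof -
  define C where "C k = columns (mpow A k ** B)" for k
  define K where "K j = span (\<Union>k<j. C k)" for j
  have Cs: "C (Suc k) = (\<lambda>x. A *v x) ` C k" for k unfolding C_def by (rule columns_Suc)
  have Kmono: "i \<le> j \<Longrightarrow> K i \<subseteq> K j" for i j
    unfolding K_def by (intro span_mono) (rule UN_mono; auto)
  have stab: "K (Suc (Suc j)) = K (Suc j)" if "K j = K (Suc j)" for j
  proof -
    have "C (Suc j) \<subseteq> K (Suc j)"
    proof -
      have "C j \<subseteq> K (Suc j)" unfolding K_def by (auto intro: span_base)
      hence "C j \<subseteq> K j" using that by simp
      hence "(\<lambda>x. A *v x) ` C j \<subseteq> (\<lambda>x. A *v x) ` K j" by blast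
      also have "\<dots> = span ((\<lambda>x. A *v x) ` (\<Union>k<j. C k))"
        unfolding K_def by (simp add: span_linear_image)
      also have "(\<lambda>x. A *v x) ` (\<Union>k<j. C k) = (\<Union>k<j. C (Suc k))" by (auto simp: Cs)
      also have "span \<dots> \<subseteq> K (Suc j)" unfolding K_def by (intro span_mono) auto
      finally show ?thesis using Cs by simp
    qed
    hence "(\<Union>k<Suc (Suc j). C k) \<subseteq> K (Suc j)"
    proof -
      have "(\<Union>k<Suc (Suc j). C k) = (\<Union>k<Suc j. C k) \<union> C (Suc j)"
        by (simp add: lessThan_Suc Un_commute)
      thus ?thesis using \<open>C (Suc j) \<subseteq> K (Suc j)\<close> unfolding K_def
        using span_superset by blast
    qed
    hence "K (Suc (Suc j)) \<subseteq> K (Suc j)" unfolding K_def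
      by (metis span_minimal subspace_span)
    thus ?thesis using Kmono[of "Suc j" "Suc (Suc j)"] by auto
  qed
  have stabd: "K (j + d) = K j" if "K j = K (Suc j)" for j d
  proof -
    have Q: "K (j + d) = K (Suc (j + d))" for d
      by (induction d) (use that stab in auto)
    show ?thesis by (induction d) (use Q in auto)
  qed
  let ?n = "CARD('n)"
  have eqn: "K (Suc ?n) = K ?n"
  proof (rule ccontr)
    assume ne: "K (Suc ?n) \<noteq> K ?n"
    have propK: "K j \<noteq> K (Suc j)" if "j \<le> ?n" for j
    proof
      assume h: "K j = K (Suc j)"
      have "K (j + (?n - j)) = K j" "K (j + (Suc ?n - j)) = K j" using stabd[OF h] by auto
      thus False using ne that by (simp add: Suc_diff_le)
    qed
    have "j \<le> dim (K j)" if "j \<le> Suc ?n" for j using that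
    proof (induction j)
      case 0 thus ?case by simp
    next
      case (Suc j)
      have "K j \<subset> K (Suc j)" using Kmono[of j "Suc j"] propK[of j] Suc.prems by auto
      hence "dim (K j) < dim (K (Suc j))" unfolding K_def by (simp add: dim_psubset)
      thus ?case using Suc by simp
    qed
    from this[of "Suc ?n"] dim_subset_UNIV_cart[of "K (Suc ?n)"] show False by simp
  qed
  have "K (?n + d) = K ?n" for d using stabd[of ?n d] eqn by simp
  hence "K (Suc k) \<subseteq> K ?n"
    by (metis Kmono le_add_diff_inverse nle_le)
  moreover have "C k \<subseteq> K (Suc k)" unfolding K_def by (auto intro: span_base)
  ultimately show ?thesis unfolding K_def C_def by auto
qed



lemma exists_p:
  fixes A :: "real^'n^'n" and B :: "real^'r^'n"
  assumes "kalman_rank A B < CARD('n)"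
  obtains p :: "real^'n" where "p \<noteq> 0" "\<And>k. p v* (mpow A k ** B) = 0"
proof -
  let ?S = "\<Union>j<CARD('n). columns (mpow A j ** B)"
  have dimS: "dim ?S < DIM(real^'n)" using assms unfolding kalman_rank_def by (simp add: dim_span)
  then obtain p :: "real^'n" where p: "p \<noteq> 0" "\<And>y. y \<in> span ?S \<Longrightarrow> orthogonal p y"
    using orthogonal_to_subspace_exists[OF dimS] by blast
  have "p v* (mpow A k ** B) = 0" for k
  proof -
    have "orthogonal p (column j (mpow A k ** B))" for j
      using krylov_all[of A k B] p(2) by (auto simp: columns_def)
    thus ?thesis
      by (simp add: vec_eq_iff vector_matrix_mult_def orthogonal_def inner_vec_def column_def mult.commute)
  qed
  thus ?thesis using p that by blast
qed

definition Lf :: "real^'n \<Rightarrow> complex^'n \<Rightarrow> complex" where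
  "Lf r x = (\<Sum>i\<in>UNIV. complex_of_real (r $ i) * x $ i)"

lemma Lf_bl: "bounded_linear (Lf r)"
  unfolding Lf_def
  by (intro bounded_linear_sum bounded_linear_compose[OF bounded_linear_mult_right] bounded_linear_vec_nth)

lemma Lf_cmat: "Lf r (cmat M *v x) = Lf (r v* M) x"
  unfolding Lf_def cmat_def matrix_vector_mult_def vector_matrix_mult_def
  by (simp add: sum_distrib_left sum_distrib_right mult.assoc mult.commute mult.left_commute)
     (rule sum.swap)

lemma Lf_zero: "Lf 0 x = 0" by (simp add: Lf_def)

lemma mpow_row:
  "(p v* mpow A k) v* A = p v* mpow A (Suc k)"
  by (simp add: vector_matrix_mul_assoc mpow_comm)



lemma shift_int:
  fixes f :: "real \<Rightarrow> 'a::{banach,second_countable_topology}"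
  shows "(LINT \<theta>:{a..b}|lborel. f (t + \<theta>)) = (LINT x:{t+a..t+b}|lborel. f x)"
proof -
  have "(LINT x:{t+a..t+b}|lborel. f x) = (\<integral>x. indicator {t+a..t+b} (t + 1 * x) *\<^sub>R f (t + 1 * x) \<partial>lborel)"
    unfolding set_lebesgue_integral_def
    using lborel_integral_real_affine[of 1 "\<lambda>x. indicator {t+a..t+b} x *\<^sub>R f x" t] by simp
  also have "\<dots> = (LINT \<theta>:{a..b}|lborel. f (t + \<theta>))"
    unfolding set_lebesgue_integral_def
    by (intro Bochner_Integration.integral_cong refl) (auto simp: indicator_def)
  finally show ?thesis by simp
qed

lemma shift_integrable:
  fixes f :: "real \<Rightarrow> 'a::{banach,second_countable_topology}"
  shows "set_integrable lborel {a..b} (\<lambda>\<theta>. f (t + \<theta>)) \<longleftrightarrow> set_integrable lborel {t+a..t+b} f"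
proof -
  have "set_integrable lborel {t+a..t+b} f \<longleftrightarrow>
      integrable lborel (\<lambda>x. indicator {t+a..t+b} (t + 1 * x) *\<^sub>R f (t + 1 * x))"
    unfolding set_integrable_def
    using lborel_integrable_real_affine_iff[of 1 "\<lambda>x. indicator {t+a..t+b} x *\<^sub>R f x" t] by simp
  also have "\<dots> \<longleftrightarrow> set_integrable lborel {a..b} (\<lambda>\<theta>. f (t + \<theta>))"
    unfolding set_integrable_def
    by (intro Bochner_Integration.integrable_cong refl) (auto simp: indicator_def)
  finally show ?thesis by simp
qed

lemma int_ind_Icc: "integrable lborel (indicat_real {a..b::real})"
  by (cases "a \<le> b") (auto simp: integrable_indicator_iff ennreal_less_top)

lemma set_integrable_const_Icc: "set_integrable lborel {a..b::real} (\<lambda>t. c::real)"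
  unfolding set_integrable_def using int_ind_Icc[of a b]
  by (simp add: mult.commute)

lemma L2_integrable:
  fixes g :: "real \<Rightarrow> 'a::{banach,second_countable_topology}"
  assumes "L2_on a b g"
  shows "set_integrable lborel {a..b} g"
proof -
  have m: "(\<lambda>t. indicator {a..b} t *\<^sub>R g t) \<in> borel_measurable lborel"
    and i: "set_integrable lborel {a..b} (\<lambda>t. (norm (g t))\<^sup>2)"
    using assms unfolding L2_on_def by auto
  have i1: "set_integrable lborel {a..b} (\<lambda>t. 1::real)"
    by (rule set_integrable_const_Icc)
  have "set_integrable lborel {a..b} (\<lambda>t. 1 + (norm (g t))\<^sup>2)"
    using set_integral_add(1)[OF i1 i] by simp
  hence I: "integrable lborel (\<lambda>t. indicator {a..b} t *\<^sub>R (1 + (norm (g t))\<^sup>2))"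
    unfolding set_integrable_def .
  show ?thesis unfolding set_integrable_def
  proof (rule Bochner_Integration.integrable_bound[OF I m], rule AE_I2)
    fix t
    have "norm (g t) \<le> 1 + (norm (g t))\<^sup>2"
      by (smt (verit, ccfv_threshold) norm_ge_zero power2_eq_square mult_le_cancel_right1 zero_le_power2)
    thus "norm (indicator {a..b} t *\<^sub>R g t) \<le> norm (indicator {a..b} t *\<^sub>R (1 + (norm (g t))\<^sup>2))"
      by (auto simp: indicator_def)
  qed
qed

lemma mv_bound:
  fixes M :: "complex^'n^'n" and x :: "complex^'n"
  shows "norm (M *v x) \<le> (\<Sum>i\<in>UNIV. \<Sum>j\<in>UNIV. ((norm (M$i$j))\<^sup>2 + (norm x)\<^sup>2) / 2)"
proof -
  have "norm (M *v x) \<le> (\<Sum>i\<in>UNIV. norm ((M *v x) $ i))"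
    unfolding norm_vec_def by (rule L2_set_le_sum) simp
  also have "\<dots> \<le> (\<Sum>i\<in>UNIV. \<Sum>j\<in>UNIV. ((norm (M$i$j))\<^sup>2 + (norm x)\<^sup>2) / 2)"
  proof (rule sum_mono)
    fix i
    have "norm ((M *v x) $ i) \<le> (\<Sum>j\<in>UNIV. norm (M$i$j * x$j))"
      unfolding matrix_vector_mult_def by (simp add: norm_sum)
    also have "\<dots> \<le> (\<Sum>j\<in>UNIV. ((norm (M$i$j))\<^sup>2 + (norm x)\<^sup>2) / 2)"
    proof (rule sum_mono)
      fix j
      have "norm (x$j) \<le> norm x" by (rule Finite_Cartesian_Product.norm_nth_le)
      hence "norm (M$i$j) * norm (x$j) \<le> norm (M$i$j) * norm x"
        by (simp add: mult_left_mono)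
      also have "\<dots> \<le> ((norm (M$i$j))\<^sup>2 + (norm x)\<^sup>2) / 2"
        using sum_squares_bound[of "norm (M$i$j)" "norm x"] by (simp add: power2_eq_square)
      finally show "norm (M$i$j * x$j) \<le> ((norm (M$i$j))\<^sup>2 + (norm x)\<^sup>2) / 2"
        by (simp add: norm_mult)
    qed
    finally show "norm ((M *v x) $ i) \<le> (\<Sum>j\<in>UNIV. ((norm (M$i$j))\<^sup>2 + (norm x)\<^sup>2) / 2)" .
  qed
  finally show ?thesis .
qed

lemma set_integrable_sum:
  fixes f :: "'i \<Rightarrow> 'b \<Rightarrow> 'a::{banach,second_countable_topology}"
  assumes "finite I" "\<And>i. i \<in> I \<Longrightarrow> set_integrable M A (f i)"
  shows "set_integrable M A (\<lambda>x. \<Sum>i\<in>I. f i x)"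
  unfolding set_integrable_def scaleR_sum_right
  by (rule Bochner_Integration.integrable_sum[of I M "\<lambda>i x. indicator A x *\<^sub>R f i x"])
     (use assms in \<open>auto simp: set_integrable_def\<close>)

lemma set_integral_sum:
  fixes f :: "'i \<Rightarrow> 'b \<Rightarrow> 'a::{banach,second_countable_topology}"
  assumes "finite I" "\<And>i. i \<in> I \<Longrightarrow> set_integrable M A (f i)"
  shows "(LINT x:A|M. (\<Sum>i\<in>I. f i x)) = (\<Sum>i\<in>I. LINT x:A|M. f i x)"
  unfolding set_lebesgue_integral_def scaleR_sum_right
  by (rule Bochner_Integration.integral_sum[of I M "\<lambda>i x. indicator A x *\<^sub>R f i x"])
     (use assms in \<open>auto simp: set_integrable_def\<close>)

lemma set_integral_mono_Icc:
  fixes f :: "real \<Rightarrow> real"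
  assumes "set_integrable lborel {c..d} f" "\<And>x. x \<in> {c..d} \<Longrightarrow> 0 \<le> f x" "c \<le> a" "b \<le> d"
  shows "(LINT x:{a..b}|lborel. f x) \<le> (LINT x:{c..d}|lborel. f x)"
proof -
  have "set_integrable lborel {a..b} f"
    by (rule set_integrable_subset[OF assms(1)]) (use assms in auto)
  thus ?thesis using assms unfolding set_integrable_def set_lebesgue_integral_def
    by (intro integral_mono) (auto simp: indicator_def)
qed

lemma conv_bound:
  fixes Am :: "real \<Rightarrow> complex^'n^'n" and h :: "real \<Rightarrow> complex^'n"
  assumes AL: "\<forall>i j. L2_on (-1) 0 (\<lambda>\<theta>. Am \<theta> $ i $ j)"
    and hI: "set_integrable lborel {-1..T} (\<lambda>x. (norm (h x))\<^sup>2)"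
    and hnn: True
    and t: "0 \<le> t" "t \<le> T"
  shows "norm (LINT \<theta>:{-1..0}|lborel. Am \<theta> *v h (t+\<theta>))
     \<le> (\<Sum>i\<in>UNIV. \<Sum>j\<in>UNIV. ((LINT \<theta>:{-1..0}|lborel. (norm (Am \<theta>$i$j))\<^sup>2)
                + (LINT x:{-1..T}|lborel. (norm (h x))\<^sup>2)) / 2)"
proof -
  let ?S = "{-1..0::real}"
  define Bd where "Bd \<theta> = (\<Sum>i\<in>UNIV. \<Sum>j\<in>UNIV. ((norm (Am \<theta>$i$j))\<^sup>2 + (norm (h (t+\<theta>)))\<^sup>2) / 2)" for \<theta>
  have aI: "set_integrable lborel ?S (\<lambda>\<theta>. (norm (Am \<theta>$i$j))\<^sup>2)" for i j
    using AL unfolding L2_on_def by auto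
  have hS: "set_integrable lborel ?S (\<lambda>\<theta>. (norm (h (t+\<theta>)))\<^sup>2)"
    unfolding shift_integrable[of "-1" 0 "\<lambda>x. (norm (h x))\<^sup>2" t]
    by (rule set_integrable_subset[OF hI]) (use t in auto)
  have termI: "set_integrable lborel ?S (\<lambda>\<theta>. ((norm (Am \<theta>$i$j))\<^sup>2 + (norm (h (t+\<theta>)))\<^sup>2) / 2)" for i j
    using set_integral_add(1)[OF aI hS] by simp
  have BdI: "set_integrable lborel ?S Bd"
    unfolding Bd_def by (intro set_integrable_sum termI) auto
  have "norm (LINT \<theta>:?S|lborel. Am \<theta> *v h (t+\<theta>))
        \<le> (\<integral>\<theta>. norm (indicator ?S \<theta> *\<^sub>R (Am \<theta> *v h (t+\<theta>))) \<partial>lborel)"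
    unfolding set_lebesgue_integral_def by (rule integral_norm_bound)
  also have "\<dots> \<le> (\<integral>\<theta>. indicator ?S \<theta> *\<^sub>R Bd \<theta> \<partial>lborel)"
  proof (rule integral_mono_AE')
    show "integrable lborel (\<lambda>\<theta>. indicator ?S \<theta> *\<^sub>R Bd \<theta>)"
      using BdI unfolding set_integrable_def .
    show "AE x in lborel. norm (indicator ?S x *\<^sub>R (Am x *v h (t + x))) \<le> indicator ?S x *\<^sub>R Bd x"
      by (rule AE_I2) (auto simp: indicator_def Bd_def intro: mv_bound)
    show "AE x in lborel. 0 \<le> indicator ?S x *\<^sub>R Bd x"
      by (rule AE_I2) (auto simp: indicator_def Bd_def intro!: sum_nonneg)
  qed
  also have "\<dots> = (LINT \<theta>:?S|lborel. Bd \<theta>)" by (simp add: set_lebesgue_integral_def)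
  also have "\<dots> = (\<Sum>i\<in>UNIV. \<Sum>j\<in>UNIV. ((LINT \<theta>:?S|lborel. (norm (Am \<theta>$i$j))\<^sup>2)
                + (LINT \<theta>:?S|lborel. (norm (h (t+\<theta>)))\<^sup>2)) / 2)"
    unfolding Bd_def
    apply (subst set_integral_sum)
      apply simp
     apply (intro set_integrable_sum termI; simp)
    apply (intro sum.cong refl)
    apply (subst set_integral_sum)
      apply simp
     apply (intro termI)
    apply (intro sum.cong refl)
    apply (subst set_integral_divide_zero)
    apply (subst set_integral_add(2)[OF aI hS])
    apply simp
    done
  also have "\<dots> \<le> (\<Sum>i\<in>UNIV. \<Sum>j\<in>UNIV. ((LINT \<theta>:?S|lborel. (norm (Am \<theta>$i$j))\<^sup>2)
                + (LINT x:{-1..T}|lborel. (norm (h x))\<^sup>2)) / 2)"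
  proof -
    have "(LINT \<theta>:?S|lborel. (norm (h (t+\<theta>)))\<^sup>2) = (LINT x:{t + -1..t + 0}|lborel. (norm (h x))\<^sup>2)"
      by (rule shift_int)
    also have "\<dots> \<le> (LINT x:{-1..T}|lborel. (norm (h x))\<^sup>2)"
      by (rule set_integral_mono_Icc[OF hI]) (use t in auto)
    finally show ?thesis by (intro sum_mono) simp
  qed
  finally show ?thesis .
qed

lemma conv_bound2:
  fixes Am :: "real \<Rightarrow> complex^'n^'n" and h :: "real \<Rightarrow> complex^'n"
  assumes AL: "\<forall>i j. L2_on (-1) 0 (\<lambda>\<theta>. Am \<theta> $ i $ j)"
    and hI: "set_integrable lborel {-1..T} H"
    and hH: "\<And>x. x \<in> {-1..T} \<Longrightarrow> (norm (h x))\<^sup>2 \<le> H x"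
    and t: "0 \<le> t" "t \<le> T"
  shows "norm (LINT \<theta>:{-1..0}|lborel. Am \<theta> *v h (t+\<theta>))
     \<le> (\<Sum>i\<in>UNIV. \<Sum>j\<in>UNIV. ((LINT \<theta>:{-1..0}|lborel. (norm (Am \<theta>$i$j))\<^sup>2)
                + (LINT x:{-1..T}|lborel. H x)) / 2)"
proof -
  let ?S = "{-1..0::real}"
  define Bd where "Bd \<theta> = (\<Sum>i\<in>UNIV. \<Sum>j\<in>UNIV. ((norm (Am \<theta>$i$j))\<^sup>2 + H (t+\<theta>)) / 2)" for \<theta>
  have aI: "set_integrable lborel ?S (\<lambda>\<theta>. (norm (Am \<theta>$i$j))\<^sup>2)" for i j
    using AL unfolding L2_on_def by auto
  have hS: "set_integrable lborel ?S (\<lambda>\<theta>. H (t+\<theta>))"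
    unfolding shift_integrable[of "-1" 0 H t]
    by (rule set_integrable_subset[OF hI]) (use t in auto)
  have termI: "set_integrable lborel ?S (\<lambda>\<theta>. ((norm (Am \<theta>$i$j))\<^sup>2 + H (t+\<theta>)) / 2)" for i j
    using set_integral_add(1)[OF aI hS] by simp
  have BdI: "set_integrable lborel ?S Bd"
    unfolding Bd_def by (intro set_integrable_sum termI) auto
  have "norm (LINT \<theta>:?S|lborel. Am \<theta> *v h (t+\<theta>))
        \<le> (\<integral>\<theta>. norm (indicator ?S \<theta> *\<^sub>R (Am \<theta> *v h (t+\<theta>))) \<partial>lborel)"
    unfolding set_lebesgue_integral_def by (rule integral_norm_bound)
  also have "\<dots> \<le> (\<integral>\<theta>. indicator ?S \<theta> *\<^sub>R Bd \<theta> \<partial>lborel)"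
  proof (rule integral_mono_AE')
    show "integrable lborel (\<lambda>\<theta>. indicator ?S \<theta> *\<^sub>R Bd \<theta>)"
      using BdI unfolding set_integrable_def .
    show "AE x in lborel. norm (indicator ?S x *\<^sub>R (Am x *v h (t + x))) \<le> indicator ?S x *\<^sub>R Bd x"
    proof (rule AE_I2)
      fix x
      show "norm (indicator ?S x *\<^sub>R (Am x *v h (t + x))) \<le> indicator ?S x *\<^sub>R Bd x"
      proof (cases "x \<in> ?S")
        case True
        hence hx: "(norm (h (t+x)))\<^sup>2 \<le> H (t+x)" using hH[of "t+x"] t by auto
        have "norm (Am x *v h (t + x)) \<le> (\<Sum>i\<in>UNIV. \<Sum>j\<in>UNIV. ((norm (Am x$i$j))\<^sup>2 + (norm (h (t+x)))\<^sup>2) / 2)"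
          by (rule mv_bound)
        also have "\<dots> \<le> Bd x" unfolding Bd_def
          by (intro sum_mono) (use hx in simp)
        finally show ?thesis using True by simp
      qed simp
    qed
    show "AE x in lborel. 0 \<le> indicator ?S x *\<^sub>R Bd x"
    proof (rule AE_I2)
      fix x
      show "0 \<le> indicator ?S x *\<^sub>R Bd x"
      proof (cases "x \<in> ?S")
        case True
        hence "0 \<le> H (t+x)" using hH[of "t+x"] t by (smt (verit) atLeastAtMost_iff zero_le_power2)
        thus ?thesis unfolding Bd_def using True by (simp add: sum_nonneg)
      qed simp
    qed
  qed
  also have "\<dots> = (LINT \<theta>:?S|lborel. Bd \<theta>)" by (simp add: set_lebesgue_integral_def)
  also have "\<dots> = (\<Sum>i\<in>UNIV. \<Sum>j\<in>UNIV. ((LINT \<theta>:?S|lborel. (norm (Am \<theta>$i$j))\<^sup>2)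
                + (LINT \<theta>:?S|lborel. H (t+\<theta>))) / 2)"
    unfolding Bd_def
    apply (subst set_integral_sum)
      apply simp
     apply (intro set_integrable_sum termI; simp)
    apply (intro sum.cong refl)
    apply (subst set_integral_sum)
      apply simp
     apply (intro termI)
    apply (intro sum.cong refl)
    apply (subst set_integral_divide_zero)
    apply (subst set_integral_add(2)[OF aI hS])
    apply simp
    done
  also have "\<dots> \<le> (\<Sum>i\<in>UNIV. \<Sum>j\<in>UNIV. ((LINT \<theta>:?S|lborel. (norm (Am \<theta>$i$j))\<^sup>2)
                + (LINT x:{-1..T}|lborel. H x)) / 2)"
  proof -
    have "(LINT \<theta>:?S|lborel. H (t+\<theta>)) = (LINT x:{t + -1..t + 0}|lborel. H x)"
      by (rule shift_int)
    also have "\<dots> \<le> (LINT x:{-1..T}|lborel. H x)"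
      by (rule set_integral_mono_Icc[OF hI]) (use t hH in \<open>auto intro: order_trans[OF zero_le_power2]\<close>)
    finally show ?thesis by (intro sum_mono) simp
  qed
  finally show ?thesis .
qed



lemma bl_set_integral:
  fixes f :: "'m \<Rightarrow> 'a::{banach,second_countable_topology}"
    and L :: "'a \<Rightarrow> 'b::{banach,second_countable_topology}"
  assumes L: "bounded_linear L" and f: "set_integrable M A f"
  shows "L (LINT x:A|M. f x) = (LINT x:A|M. L (f x))"
proof -
  have "(LINT x:A|M. L (f x)) = integral\<^sup>L M (\<lambda>x. L (indicator A x *\<^sub>R f x))"
    unfolding set_lebesgue_integral_def using L by (simp add: linear_simps)
  also have "\<dots> = L (LINT x:A|M. f x)"
    unfolding set_lebesgue_integral_def
    by (rule integral_bounded_linear[OF L]) (use f in \<open>simp add: set_integrable_def\<close>)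
  finally show ?thesis by simp
qed

lemma bl_set_integrable:
  fixes f :: "'m \<Rightarrow> 'a::{banach,second_countable_topology}"
    and L :: "'a \<Rightarrow> 'b::{banach,second_countable_topology}"
  assumes L: "bounded_linear L" and f: "set_integrable M A f"
  shows "set_integrable M A (\<lambda>x. L (f x))"
proof -
  have "integrable M (\<lambda>x. L (indicator A x *\<^sub>R f x))"
    by (rule integrable_bounded_linear[OF L]) (use f in \<open>simp add: set_integrable_def\<close>)
  thus ?thesis unfolding set_integrable_def using L by (simp add: linear_simps)
qed

lemma Z_diff:
  fixes w :: "real \<Rightarrow> 'a::{banach,second_countable_topology}"
  assumes wI: "set_integrable lborel {-1..T} w" and st: "-1 \<le> s" "s \<le> t" "t \<le> T"
  shows "(LINT x:{-1..t}|lborel. w x) - (LINT x:{-1..s}|lborel. w x) = (LINT x:{s..t}|lborel. w x)"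
proof -
  have i1: "set_integrable lborel {-1..s} w"
    by (rule set_integrable_subset[OF wI]) (use st in auto)
  have i2: "set_integrable lborel {s<..t} w"
    by (rule set_integrable_subset[OF wI]) (use st in auto)
  have eq: "{-1..t} = {-1..s} \<union> {s<..t}" using st by auto
  have disj: "{-1..s} \<inter> {s<..t} = {}" by auto
  have "(LINT x:{-1..t}|lborel. w x) = (LINT x:{-1..s}|lborel. w x) + (LINT x:{s<..t}|lborel. w x)"
    by (subst eq) (rule set_integral_Un[OF disj i1 i2])
  moreover have "(LINT x:{s<..t}|lborel. w x) = (LINT x:{s..t}|lborel. w x)"
    by (rule set_integral_discrete_difference[where X="{s}"]) auto
  ultimately show ?thesis by simp
qed

lemma lip_core:
  fixes w :: "real \<Rightarrow> complex^'n" and L :: "nat \<Rightarrow> complex^'n \<Rightarrow> complex" and T :: real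
  assumes wI: "set_integrable lborel {-1..T} w"
    and Z0: "\<And>t. t \<in> {-1..0} \<Longrightarrow> (LINT s:{-1..t}|lborel. w s) = 0"
    and Lbl: "\<And>k. bounded_linear (L k)"
    and rec: "\<And>k. \<exists>G. AE t in lborel. t \<in> {0..T} \<longrightarrow> norm (L k (w t) - L (Suc k) (w (t-1))) \<le> G"
  shows "\<exists>M. \<forall>s t. -1 \<le> s \<longrightarrow> s \<le> t \<longrightarrow> t \<le> T \<longrightarrow>
           norm (L k (LINT x:{-1..t}|lborel. w x) - L k (LINT x:{-1..s}|lborel. w x)) \<le> M * (t - s)"
proof -
  define Z where "Z t = (LINT x:{-1..t}|lborel. w x)" for t
  define P where "P k M x \<longleftrightarrow> (\<forall>s t. -1 \<le> s \<longrightarrow> s \<le> t \<longrightarrow> t \<le> T \<longrightarrow> t \<le> x \<longrightarrow>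
           norm (L k (Z t) - L k (Z s)) \<le> M * (t - s))" for k M x
  have wsub: "set_integrable lborel {a..b} w" if "-1 \<le> a" "b \<le> T" for a b
    by (rule set_integrable_subset[OF wI]) (use that in auto)
  have main: "\<forall>k. \<exists>M. P k M (real n)" for n :: nat
  proof (induction n)
    case 0
    show ?case
    proof
      fix k show "\<exists>M. P k M (real 0)"
        by (rule exI[of _ 0]) (auto simp: P_def Z_def Z0)
    qed
  next
    case (Suc n)
    show ?case
    proof
      fix k
      obtain M where M: "P (Suc k) M (real n)" using Suc.IH by blast
      obtain G where G: "AE t in lborel. t \<in> {0..T} \<longrightarrow> norm (L k (w t) - L (Suc k) (w (t-1))) \<le> G"
        using rec by blast
      define M' where "M' = max M 0 + max G 0"
      have M'0: "0 \<le> M'" unfolding M'_def by simp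
      have claim: "norm (L k (Z t) - L k (Z s)) \<le> M' * (t - s)"
        if st: "0 \<le> s" "s \<le> t" "t \<le> T" "t \<le> real (Suc n)" for s t
      proof -
        have ws: "set_integrable lborel {s..t} w" by (rule wsub) (use st in auto)
        have Lws: "set_integrable lborel {s..t} (\<lambda>x. L k (w x))" by (rule bl_set_integrable[OF Lbl ws])
        have ws1: "set_integrable lborel {s-1..t-1} w" by (rule wsub) (use st in auto)
        have Lws1: "set_integrable lborel {s..t} (\<lambda>x. L (Suc k) (w (x - 1)))"
          using shift_integrable[of s t "\<lambda>x. L (Suc k) (w x)" "-1"]
            bl_set_integrable[OF Lbl ws1, of "Suc k"] by simp
        have E1: "L k (Z t) - L k (Z s) = (LINT x:{s..t}|lborel. L k (w x))"
        proof -
          have "L k (Z t) - L k (Z s) = L k (Z t - Z s)" using Lbl[of k] by (simp add: linear_simps)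
          also have "Z t - Z s = (LINT x:{s..t}|lborel. w x)"
            unfolding Z_def by (rule Z_diff[OF wI]) (use st in auto)
          also have "L k \<dots> = (LINT x:{s..t}|lborel. L k (w x))"
            by (rule bl_set_integral[OF Lbl ws])
          finally show ?thesis .
        qed
        have E2: "L (Suc k) (Z (t-1)) - L (Suc k) (Z (s-1)) = (LINT x:{s..t}|lborel. L (Suc k) (w (x - 1)))"
        proof -
          have "L (Suc k) (Z (t-1)) - L (Suc k) (Z (s-1)) = L (Suc k) (LINT x:{s-1..t-1}|lborel. w x)"
          proof -
            have "L (Suc k) (Z (t-1)) - L (Suc k) (Z (s-1)) = L (Suc k) (Z (t-1) - Z (s-1))"
              using Lbl[of "Suc k"] by (simp add: linear_simps)
            also have "Z (t-1) - Z (s-1) = (LINT x:{s-1..t-1}|lborel. w x)"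
              unfolding Z_def by (rule Z_diff[OF wI]) (use st in auto)
            finally show ?thesis .
          qed
          also have "\<dots> = (LINT x:{s-1..t-1}|lborel. L (Suc k) (w x))"
            by (rule bl_set_integral[OF Lbl ws1])
          also have "\<dots> = (LINT x:{s..t}|lborel. L (Suc k) (w (x - 1)))"
            using shift_int[of s t "\<lambda>x. L (Suc k) (w x)" "-1"] by simp
          finally show ?thesis .
        qed
        have D: "norm ((LINT x:{s..t}|lborel. L k (w x)) - (LINT x:{s..t}|lborel. L (Suc k) (w (x - 1))))
                 \<le> max G 0 * (t - s)"
        proof -
          have dI: "set_integrable lborel {s..t} (\<lambda>x. L k (w x) - L (Suc k) (w (x - 1)))"
            using Lws Lws1 by (rule set_integral_diff(1))
          have "norm ((LINT x:{s..t}|lborel. L k (w x)) - (LINT x:{s..t}|lborel. L (Suc k) (w (x - 1))))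
              = norm (LINT x:{s..t}|lborel. L k (w x) - L (Suc k) (w (x - 1)))"
            by (simp add: set_integral_diff(2)[OF Lws Lws1])
          also have "\<dots> \<le> (LINT x:{s..t}|lborel. norm (L k (w x) - L (Suc k) (w (x - 1))))"
            by (rule set_integral_norm_bound[OF dI])
          also have "\<dots> \<le> (LINT x:{s..t}|lborel. max G 0)"
          proof (rule set_integral_mono_AE)
            show "set_integrable lborel {s..t} (\<lambda>x. norm (L k (w x) - L (Suc k) (w (x - 1))))"
              using dI by (rule set_integrable_norm)
            show "set_integrable lborel {s..t} (\<lambda>x. max G 0)" by (rule set_integrable_const_Icc)
            show "AE x\<in>{s..t} in lborel. norm (L k (w x) - L (Suc k) (w (x - 1))) \<le> max G 0"
              using G by eventually_elim (use st in auto)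
          qed
          also have "\<dots> = max G 0 * (t - s)"
            using set_integral_const[of "{s..t}" lborel "max G 0"] st by simp
          finally show ?thesis .
        qed
        have IH: "norm (L (Suc k) (Z (t-1)) - L (Suc k) (Z (s-1))) \<le> max M 0 * (t - s)"
        proof -
          have "norm (L (Suc k) (Z (t-1)) - L (Suc k) (Z (s-1))) \<le> M * ((t-1) - (s-1))"
            by (rule M[unfolded P_def, rule_format]) (use st in auto)
          also have "\<dots> \<le> max M 0 * (t - s)" using st by (simp add: mult_right_mono)
          finally show ?thesis .
        qed
        have "norm (L k (Z t) - L k (Z s)) \<le>
              norm ((LINT x:{s..t}|lborel. L k (w x)) - (LINT x:{s..t}|lborel. L (Suc k) (w (x - 1))))
              + norm (L (Suc k) (Z (t-1)) - L (Suc k) (Z (s-1)))"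
          unfolding E1 E2
          using norm_triangle_ineq[of "(LINT x:{s..t}|lborel. L k (w x)) - (LINT x:{s..t}|lborel. L (Suc k) (w (x - 1)))"
                  "LINT x:{s..t}|lborel. L (Suc k) (w (x - 1))"] by simp
        also have "\<dots> \<le> M' * (t - s)" using D IH unfolding M'_def by (simp add: algebra_simps)
        finally show ?thesis .
      qed
      have "P k M' (real (Suc n))"
        unfolding P_def
      proof (intro allI impI)
        fix s t assume st: "-1 \<le> s" "s \<le> t" "t \<le> T" "t \<le> real (Suc n)"
        show "norm (L k (Z t) - L k (Z s)) \<le> M' * (t - s)"
        proof (cases "t \<le> 0")
          case True
          thus ?thesis using st M'0 by (simp add: Z_def Z0)
        next
          case False
          define s' where "s' = max s 0"
          have "Z s = Z s'" using st False by (auto simp: s'_def Z_def Z0 max_def)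
          moreover have "norm (L k (Z t) - L k (Z s')) \<le> M' * (t - s')"
            by (rule claim) (use st False in \<open>auto simp: s'_def\<close>)
          moreover have "M' * (t - s') \<le> M' * (t - s)"
            using M'0 by (intro mult_left_mono) (auto simp: s'_def)
          ultimately show ?thesis by simp
        qed
      qed
      thus "\<exists>M. P k M (real (Suc n))" by blast
    qed
  qed
  obtain n :: nat where "T \<le> real n" using real_arch_simple by blast
  then obtain M where "P k M (real n)" using main by blast
  hence "\<forall>s t. -1 \<le> s \<longrightarrow> s \<le> t \<longrightarrow> t \<le> T \<longrightarrow> norm (L k (Z t) - L k (Z s)) \<le> M * (t - s)"
    using \<open>T \<le> real n\<close> unfolding P_def by auto
  thus ?thesis unfolding Z_def by blast
qed



lemma HK_to_lborel:
  fixes f :: "real \<Rightarrow> real"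
  assumes hi: "(f has_integral I) {a..b}" and nn: "\<And>x. x \<in> {a..b} \<Longrightarrow> 0 \<le> f x"
    and m: "(\<lambda>x. indicator {a..b} x *\<^sub>R f x) \<in> borel_measurable lborel"
  shows "set_integrable lborel {a..b} f" "(LINT x:{a..b}|lborel. f x) = I"
proof -
  have "f absolutely_integrable_on {a..b}"
    using hi nn by (intro nonnegative_absolutely_integrable_1) (auto simp: integrable_on_def)
  hence "set_integrable lebesgue {a..b} f" by simp
  thus si: "set_integrable lborel {a..b} f"
    unfolding set_integrable_def using integrable_completion[OF m] by simp
  show "(LINT x:{a..b}|lborel. f x) = I"
    using set_borel_integral_eq_integral(2)[OF si] hi by (simp add: integral_unique)
qed

lemma powr_int:
  fixes c q :: real
  assumes "q > -1" "0 \<le> c"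
  shows "set_integrable lborel {0..c} (\<lambda>x. x powr q)"
        "(LINT x:{0..c}|lborel. x powr q) = c powr (q+1) / (q+1)"
proof -
  have m: "(\<lambda>x. indicator {0..c} x *\<^sub>R (x powr q)) \<in> borel_measurable lborel"
    by measurable
  show "set_integrable lborel {0..c} (\<lambda>x. x powr q)"
    "(LINT x:{0..c}|lborel. x powr q) = c powr (q+1) / (q+1)"
    using HK_to_lborel[OF has_integral_powr_from_0[OF assms] _ m] by auto
qed



definition tgt :: "real \<Rightarrow> complex^'n \<Rightarrow> real \<Rightarrow> complex^'n" where
  "tgt T e t = (if t \<in> {T-1..T} then ((t - (T-1)) powr (3/4)) *\<^sub>R e else 0)"

lemma shifted_powr:
  fixes a b q :: real
  assumes "q > -1" "a \<le> b"
  shows "set_integrable lborel {a..b} (\<lambda>x. (x - a) powr q)"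
        "(LINT x:{a..b}|lborel. (x - a) powr q) = (b - a) powr (q+1) / (q+1)"
proof -
  have e: "{a + 0..a + (b - a)} = {a..b}" by simp
  show "set_integrable lborel {a..b} (\<lambda>x. (x - a) powr q)"
    using shift_integrable[of 0 "b-a" "\<lambda>x. (x - a) powr q" a] powr_int(1)[OF assms(1), of "b-a"] assms
    unfolding e by simp
  show "(LINT x:{a..b}|lborel. (x - a) powr q) = (b - a) powr (q+1) / (q+1)"
    using shift_int[of 0 "b-a" "\<lambda>x. (x - a) powr q" a] powr_int(2)[OF assms(1), of "b-a"] assms
    unfolding e by simp
qed

lemma tgt_H1:
  fixes e :: "complex^'n"
  shows "tgt T e \<in> H1_restr T"
proof -
  define a where "a = T - 1"
  have aT: "a \<le> T" unfolding a_def by simp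
  define c where "c s = 3/4 * (s - a) powr (-1/4)" for s
  define g where "g s = c s *\<^sub>R e" for s
  have cI: "set_integrable lborel {a..t} c" if "a \<le> t" for t
    unfolding c_def using shifted_powr(1)[of "-1/4" a t] that by simp
  have cV: "(LINT s:{a..t}|lborel. c s) = (t - a) powr (3/4)" if "a \<le> t" for t
    unfolding c_def using shifted_powr(2)[of "-1/4" a t] that by simp
  have L2: "L2_on a T g"
    unfolding L2_on_def
  proof
    show "(\<lambda>t. indicator {a..T} t *\<^sub>R g t) \<in> borel_measurable lborel"
      unfolding g_def c_def by measurable
    have I: "set_integrable lborel {a..T} (\<lambda>x. (9/16 * (norm e)\<^sup>2) * (x - a) powr (-1/2))"
      using shifted_powr(1)[of "-1/2" a T] aT by simp
    show "set_integrable lborel {a..T} (\<lambda>t. (norm (g t))\<^sup>2)"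
    proof (rule set_integrable_cong[THEN iffD1, OF refl refl _ I])
      fix x assume "x \<in> {a..T}"
      hence x: "0 \<le> x - a" by simp
      have "((x - a) powr (-1/4))\<^sup>2 = (x - a) powr (-1/2)"
        using x by (simp add: power2_eq_square powr_add[symmetric])
      hence "(c x)\<^sup>2 = 9/16 * (x - a) powr (-1/2)"
        unfolding c_def by (simp add: power_mult_distrib power_divide)
      moreover have "(norm (g x))\<^sup>2 = (c x)\<^sup>2 * (norm e)\<^sup>2"
        unfolding g_def by (simp add: power_mult_distrib)
      ultimately show "9/16 * (norm e)\<^sup>2 * (x - a) powr (-1/2) = (norm (g x))\<^sup>2"
        by simp
    qed
  qed
  have eq: "tgt T e t = tgt T e a + (LINT s:{a..t}|lborel. g s)" if "t \<in> {a..T}" for t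
  proof -
    have "(LINT s:{a..t}|lborel. g s) = (LINT s:{a..t}|lborel. c s) *\<^sub>R e"
    proof -
      have "(\<lambda>x. indicator {a..t} x *\<^sub>R g x) = (\<lambda>x. (indicator {a..t} x * c x) *\<^sub>R e)"
        unfolding g_def by (auto simp: indicator_def)
      moreover have "integrable lborel (\<lambda>x. indicator {a..t} x * c x)"
        using cI[of t] that by (simp add: set_integrable_def)
      ultimately show ?thesis unfolding set_lebesgue_integral_def
        by (simp add: integral_scaleR_left)
    qed
    thus ?thesis using that cV[of t] by (simp add: tgt_def a_def)
  qed
  show ?thesis unfolding H1_restr_def H1_on_def
    using L2 eq by (auto simp: a_def tgt_def)
qed



lemma final_arith:
  fixes cp M :: real
  assumes cp: "cp > 0" and H: "\<And>x. 0 \<le> x \<Longrightarrow> x \<le> 1 \<Longrightarrow> x powr (3/4) * cp \<le> M * x"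
  shows False
proof -
  obtain N :: nat where N: "M / cp < real N" "1 \<le> N"
    using reals_Archimedean2[of "max (M / cp) 1"] by (metis max.strict_boundedE of_nat_1 of_nat_le_iff less_le_not_le nat_le_real_less not_less)
  define y where "y = inverse (real N)"
  have y0: "0 < y" "y \<le> 1" using N by (auto simp: y_def inverse_le_1_iff)
  have "(y ^ 4) powr (3/4) = y ^ 3"
  proof -
    have "(y ^ 4) powr (3/4) = (y powr 4) powr (3/4)" using y0 by (simp add: powr_realpow)
    also have "\<dots> = y powr 3" by (simp add: powr_powr)
    also have "\<dots> = y ^ 3" using y0 by (simp add: powr_realpow)
    finally show ?thesis .
  qed
  moreover have "(y^4) powr (3/4) * cp \<le> M * y^4"
    by (rule H) (use y0 in \<open>auto simp: power_le_one\<close>)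
  ultimately have "y^3 * cp \<le> y^3 * (M * y)"
    by (simp add: algebra_simps) (metis mult.commute mult.left_commute power_Suc numeral_3_eq_3 numeral_Bit0 Suc_numeral semiring_norm(2) semiring_norm(8))
  hence "cp \<le> M * y" using y0 by simp
  hence "cp * real N \<le> M" using N y0 by (simp add: y_def field_simps)
  moreover have "M < cp * real N" using N cp by (simp add: field_simps)
  ultimately show False by simp
qed



lemma Lf_scale: "Lf p (x *\<^sub>R (\<chi> i. complex_of_real (p $ i))) = complex_of_real (x * (\<Sum>i\<in>UNIV. p$i * p$i))"
  unfolding Lf_def vector_scaleR_component vec_lambda_beta
  by (simp add: sum_distrib_left scaleR_conv_of_real mult.commute mult.left_commute)

theorem theorem3:
  fixes Am1 :: "real^'n^'n" and B :: "real^'r^'n"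
    and A2 A3 :: "real \<Rightarrow> complex^'n^'n"
  assumes A2_L2: "\<forall>i j. L2_on (-1) 0 (\<lambda>\<theta>. A2 \<theta> $ i $ j)"
      and A3_L2: "\<forall>i j. L2_on (-1) 0 (\<lambda>\<theta>. A3 \<theta> $ i $ j)"
      and not_ctrb: "kalman_rank Am1 B < CARD('n)"
  shows "\<forall>T>0. \<not> exactly_controllable Am1 A2 A3 B T"
proof (intro allI impI notI)
  fix T :: real
  assume T0: "T > 0" and ec: "exactly_controllable Am1 A2 A3 B T"
  obtain p :: "real^'n" where p0: "p \<noteq> 0" and pB: "\<And>k. p v* (mpow Am1 k ** B) = 0"
    using exists_p[OF not_ctrb] by blast
  define e :: "complex^'n" where "e = (\<chi> i. complex_of_real (p $ i))"
  have "tgt T e \<in> reach_restr Am1 A2 A3 B T"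
    using ec tgt_H1[of T e] unfolding exactly_controllable_def by simp
  then obtain u z where uL2: "L2_on 0 T u" and ns: "neutral_solution Am1 A2 A3 B T u z"
    and feq: "tgt T e = (\<lambda>t. if t \<in> {T-1..T} then z t else 0)"
    unfolding reach_restr_def by blast
  from ns have z0: "\<And>t. t \<in> {-1..0} \<Longrightarrow> z t = 0" unfolding neutral_solution_def by blast
  from ns obtain w where wL2: "L2_on (-1) T w"
    and zrep: "\<And>t. t \<in> {-1..T} \<Longrightarrow> z t = z (-1) + (LINT s:{-1..t}|lborel. w s)"
    and AEq: "AE t in lborel. t \<in> {0..T} \<longrightarrow>
             w t = cmat Am1 *v w (t - 1)
                   + (LINT \<theta>:{-1..0}|lborel. A2 \<theta> *v w (t + \<theta>))
                   + (LINT \<theta>:{-1..0}|lborel. A3 \<theta> *v z (t + \<theta>))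
                   + cmat B *v u t"
    unfolding neutral_solution_def by blast
  have zm1: "z (-1) = 0" using z0 by simp
  have zZ: "z t = (LINT s:{-1..t}|lborel. w s)" if "t \<in> {-1..T}" for t
    using zrep[OF that] zm1 by simp
  have wI: "set_integrable lborel {-1..T} w" by (rule L2_integrable[OF wL2])
  have Z0: "(LINT s:{-1..t}|lborel. w s) = 0" if "t \<in> {-1..0}" for t
    using zZ[of t] z0[OF that] that T0 by simp
  define L where "L k = Lf (p v* mpow Am1 k)" for k
  have Lbl: "bounded_linear (L k)" for k unfolding L_def by (rule Lf_bl)
  have LA: "L k (cmat Am1 *v x) = L (Suc k) x" for k x
    unfolding L_def Lf_cmat mpow_row ..
  have LB: "L k (cmat B *v x) = 0" for k x
    unfolding L_def Lf_cmat vector_matrix_mul_assoc pB Lf_zero ..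
  have wH: "set_integrable lborel {-1..T} (\<lambda>x. (norm (w x))\<^sup>2)"
    using wL2 unfolding L2_on_def by blast
  obtain C2 where C2: "\<And>t. t \<in> {0..T} \<Longrightarrow> norm (LINT \<theta>:{-1..0}|lborel. A2 \<theta> *v w (t + \<theta>)) \<le> C2"
    using conv_bound2[OF A2_L2 wH, of w] by (auto simp: add.commute)
  define Cz where "Cz = (LINT x:{-1..T}|lborel. norm (w x))"
  have wnI: "set_integrable lborel {-1..T} (\<lambda>x. norm (w x))" by (rule set_integrable_norm[OF wI])
  have zb: "norm (z x) \<le> Cz" if "x \<in> {-1..T}" for x
  proof -
    have wIx: "set_integrable lborel {-1..x} w"
      by (rule set_integrable_subset[OF wI]) (use that in auto)
    have "norm (z x) \<le> (LINT s:{-1..x}|lborel. norm (w s))"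
      unfolding zZ[OF that] by (rule set_integral_norm_bound[OF wIx])
    also have "\<dots> \<le> Cz" unfolding Cz_def
      by (rule set_integral_mono_Icc[OF wnI]) (use that in auto)
    finally show ?thesis .
  qed
  have zH: "(norm (z x))\<^sup>2 \<le> Cz\<^sup>2" if "x \<in> {-1..T}" for x
    using zb[OF that] by (intro power_mono) auto
  obtain C3 where C3: "\<And>t. t \<in> {0..T} \<Longrightarrow> norm (LINT \<theta>:{-1..0}|lborel. A3 \<theta> *v z (t + \<theta>)) \<le> C3"
    using conv_bound2[where h=z and H="\<lambda>_. Cz\<^sup>2", OF A3_L2 set_integrable_const_Icc zH] by (auto simp: add.commute)
  have rec: "\<exists>G. AE t in lborel. t \<in> {0..T} \<longrightarrow> norm (L k (w t) - L (Suc k) (w (t-1))) \<le> G" for k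
  proof -
    obtain K where K: "\<And>x. norm (L k x) \<le> norm x * K" "K > 0"
      using bounded_linear.pos_bounded[OF Lbl[of k]] by blast
    show ?thesis
    proof (intro exI[of _ "(C2 + C3) * K"])
      show "AE t in lborel. t \<in> {0..T} \<longrightarrow> norm (L k (w t) - L (Suc k) (w (t-1))) \<le> (C2 + C3) * K"
        using AEq
      proof eventually_elim
        case (elim t)
        show ?case
        proof
          assume t: "t \<in> {0..T}"
          let ?I2 = "LINT \<theta>:{-1..0}|lborel. A2 \<theta> *v w (t + \<theta>)"
          let ?I3 = "LINT \<theta>:{-1..0}|lborel. A3 \<theta> *v z (t + \<theta>)"
          have "L k (w t) = L k (cmat Am1 *v w (t - 1)) + L k (?I2 + ?I3) + L k (cmat B *v u t)"
            using elim t Lbl[of k] by (simp add: linear_simps add.assoc)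
          hence "L k (w t) - L (Suc k) (w (t-1)) = L k (?I2 + ?I3)" by (simp add: LA LB)
          hence "norm (L k (w t) - L (Suc k) (w (t-1))) \<le> norm (?I2 + ?I3) * K" using K(1) by simp
          also have "\<dots> \<le> (C2 + C3) * K"
            using K(2) C2[OF t] C3[OF t] norm_triangle_ineq[of ?I2 ?I3]
            by (intro mult_right_mono) auto
          finally show "norm (L k (w t) - L (Suc k) (w (t-1))) \<le> (C2 + C3) * K" .
        qed
      qed
    qed
  qed
  obtain M where M: "\<And>s t. -1 \<le> s \<Longrightarrow> s \<le> t \<Longrightarrow> t \<le> T \<Longrightarrow>
        norm (L 0 (LINT x:{-1..t}|lborel. w x) - L 0 (LINT x:{-1..s}|lborel. w x)) \<le> M * (t - s)"
    using lip_core[where L=L and w=w and T=T and k=0, OF wI Z0 Lbl rec] by blast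
  define cp where "cp = (\<Sum>i\<in>UNIV. p$i * p$i)"
  have cp: "cp > 0" using p0 unfolding cp_def
    by (metis inner_gt_zero_iff inner_vec_def inner_real_def)
  have L0: "L 0 = Lf p" unfolding L_def by simp
  show False
  proof (rule final_arith[OF cp])
    fix x :: real assume x: "0 \<le> x" "x \<le> 1"
    let ?t = "T - 1 + x"
    have ft: "z ?t = tgt T e ?t" "z (T-1) = tgt T e (T-1)"
      using fun_cong[OF feq, of ?t] fun_cong[OF feq, of "T-1"] x by auto
    have "norm (L 0 (z ?t) - L 0 (z (T-1))) \<le> M * (?t - (T-1))"
      using M[of "T-1" ?t] x T0 zZ[of ?t] zZ[of "T-1"] by simp
    moreover have "L 0 (z ?t) - L 0 (z (T-1)) = complex_of_real (x powr (3/4) * cp)"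
    proof -
      have "L 0 (z ?t) - L 0 (z (T-1)) = Lf p ((x powr (3/4)) *\<^sub>R e) - Lf p 0"
        unfolding ft L0 using x by (simp add: tgt_def)
      also have "Lf p 0 = 0" using Lf_bl[of p] by (simp add: linear_simps)
      also have "Lf p ((x powr (3/4)) *\<^sub>R e) = complex_of_real (x powr (3/4) * cp)"
        unfolding e_def cp_def by (rule Lf_scale)
      finally show ?thesis by simp
    qed
    ultimately show "x powr (3/4) * cp \<le> M * x"
      using x cp by (simp add: norm_mult abs_of_nonneg)
  qed
qed


end
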